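(* Let $\mathrm{A}$ be any nontrivial system of Bilocal Classical Theory (BCT), and let $\rho=\sum_{i=1}^{D_{\mathrm A}}p_i|i)_{\mathrm A}$ be a deterministic state of $\mathrm A$, where $|1)_{\mathrm A},\dots,|D_{\mathrm A})_{\mathrm A}$ are the pure states of $\mathrm A$ and $\mathbf p=(p_i)_i$ is a probability distribution. Then the information content of $\rho$ is \[ I(\rho)=\frac{H(\mathbf p)+1}{2}, \] where $H(\mathbf p)=-\sum_i p_i\log_2 p_i$ is the Shannon entropy.
   Context: BCT is an operational probabilistic theory with the following structure. Systems: a trivial system $\mathrm I$ (with $\mathrm{AI}=\mathrm{IA}=\mathrm A$) and, for every integer $D>1$, exactly one system of size $D$ (the size $D_{\mathrm A}$ is the dimension of the real span of the states of $\mathrm A$). For a nontrivial system $\mathrm A$, every state is a nonnegative combination $\sum_i p_i|i)_{\mathrm A}$ of the $D_{\mathrm A}$ pure states $|i)_{\mathrm A}$, which are the vertices of the simplex of deterministic states (deterministic iff $\sum_i p_i=1$) and are jointly perfectly discriminable; each system has a unique deterministic effect $e_{\mathrm A}$, with $(e_{\mathrm A}|i)_{\mathrm A}=1$. Composition: for nontrivial $\mathrm A,\mathrm B$, the composite $\mathrm{AB}$ is the system of size $2D_{\mathrm A}D_{\mathrm B}$, with pure states $|(ij)_s)_{\mathrm{AB}}$, $1\le i\le D_{\mathrm A}$, $1\le j\le D_{\mathrm B}$, $s\in\{+,-\}$; parallel composition of pure states is $|i)_{\mathrm A}\boxtimes|j)_{\mathrm B}=\tfrac12\sum_{s=\pm}|(ij)_s)_{\mathrm{AB}}$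 (extended bilinearly), and for three systems $((ij)_{s_1}k)_{s_2}=(i(jk)_{s_1s_2})_{s_1}$, signs multiplying as $\pm1$. Transformations act linearly. Deterministic transformations (channels) $\mathcal C\in\mathsf{Tr}_1(\mathrm E\to\mathrm F)$ between nontrivial systems are exactly those for which, for each $j\in\{1,\dots,D_{\mathrm E}\}$, there is a probability distribution $\{\lambda^{(j)}_{m\tau}\}$ over $(m,\tau)\in\{1,\dots,D_{\mathrm F}\}\times\{+,-\}$ such that for every system $\mathrm A$ and every pure state, $(\mathcal I_{\mathrm A}\boxtimes\mathcal C)|(ij)_s)_{\mathrm{AE}}=\sum_{m,\tau}\lambda^{(j)}_{m\tau}|(im)_{\tau s})_{\mathrm{AF}}$. Multiple copies: $\mathrm A^{\boxtimes N}$ denotes $(\cdots((\mathrm A_1\mathrm A_2)\mathrm A_3)\cdots)\mathrm A_N$ with each $\mathrm A_k$ a copy of $\mathrm A$; its pure states are labelled $|\mathbf i_{\mathbf s})$ with $\mathbf i\in\{1,\dots,D_{\mathrm A}\}^N$, $\mathbf s\in\{+,-\}^{N-1}$, and $\rho^{\boxtimes N}=\sum_{\mathbf i,\mathbf s}p_{i_1}\cdots p_{i_N}2^{-(N-1)}|\mathbf i_{\mathbf s})$. The bibit $\mathrm B$ is the system of size $2$. Information content. A dilation of a state $\sigma$ of a system $\mathrm X$ is a state $\Psi$ of $\mathrm{XE}$ (for some system $\mathrm E$) with $(\mathcal I_{\mathrm X}\boxtimes e_{\mathrm E})\Psi=\sigma$. A refinement of a state $\Psi$ is a finite collection of states $\{\Gamma_i\}$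 belonging to a common preparation test with $\sum_i\Gamma_i=\Psi$. The operational norm of an element $\delta$ of the real span of states is $\|\delta\|_{\rm op}=\sup_{\{a_0,a_1\}}(a_0-a_1|\delta)$ over binary observation tests; in BCT it equals $\sum_k|\delta_k|$ for $\delta=\sum_k\delta_k|k)$ expanded in pure states. For a channel $\mathcal C$ on $\mathrm A^{\boxtimes N}$, $D(\rho^{\boxtimes N},\mathcal C)=\sup_{\Psi}\sup_{\{\Gamma_i\}}\sum_i\|(\mathcal C\boxtimes\mathcal I_{\mathrm E})\Gamma_i-\Gamma_i\|_{\rm op}$, the suprema over all dilations $\Psi$ of $\rho^{\boxtimes N}$ (all ancillas $\mathrm E$) and all refinements $\{\Gamma_i\}$ of $\Psi$. Let $E_{N,M,\varepsilon}(\rho)$ be the set of pairs of channels $\mathcal E\in\mathsf{Tr}_1(\mathrm A^{\boxtimes N}\to\mathrm B^{\boxtimes M})$, $\mathcal D\in\mathsf{Tr}_1(\mathrm B^{\boxtimes M}\to\mathrm A^{\boxtimes N})$ with $D(\rho^{\boxtimes N},\mathcal D\mathcal E)<\varepsilon$; $R_{N,\varepsilon}(\rho)=\min\{M:E_{N,M,\varepsilon}(\rho)\neq\emptyset\}/N$, and $I(\rho)=\lim_{\varepsilon\to0}\limsup_{N\to\infty}R_{N,\varepsilon}(\rho)$. *)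

theory Defs
  imports Complex_Main "HOL-Library.Extended_Real" "HOL-Library.Liminf_Limsup"
begin

text \<open>A nontrivial system is identified with a finite label set of its pure states;
  a (unnormalised) element of the span of states is a real function on labels.
  Signs are booleans: True = +, False = -, and sign product s1*s2 is (s1 = s2).\<close>

type_synonym 'a vec = "'a \<Rightarrow> real"

definition states_on :: "'a set \<Rightarrow> 'a vec set" where
  "states_on L = {v. (\<forall>a. 0 \<le> v a) \<and> (\<forall>a. a \<notin> L \<longrightarrow> v a = 0)}"

definition opnorm :: "'a set \<Rightarrow> 'a vec \<Rightarrow> real" where
  "opnorm L v = (\<Sum>a\<in>L. \<bar>v a\<bar>)"

text \<open>Channels E -> F (label sets L1, L2): for each input pure state x a probability
  distribution lam x y tau over output pure state y and sign tau.\<close>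
definition is_channel :: "'a set \<Rightarrow> 'b set \<Rightarrow> ('a \<Rightarrow> 'b \<Rightarrow> bool \<Rightarrow> real) \<Rightarrow> bool" where
  "is_channel L1 L2 lam \<longleftrightarrow>
     (\<forall>x\<in>L1. (\<forall>y t. 0 \<le> lam x y t) \<and> (\<forall>y t. y \<notin> L2 \<longrightarrow> lam x y t = 0)
              \<and> (\<Sum>y\<in>L2. lam x y True + lam x y False) = 1)
     \<and> (\<forall>x y t. x \<notin> L1 \<longrightarrow> lam x y t = 0)"

definition chan_comp :: "'b set \<Rightarrow> ('a \<Rightarrow> 'b \<Rightarrow> bool \<Rightarrow> real) \<Rightarrow> ('b \<Rightarrow> 'c \<Rightarrow> bool \<Rightarrow> real)
     \<Rightarrow> ('a \<Rightarrow> 'c \<Rightarrow> bool \<Rightarrow> real)" where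
  "chan_comp LY lamE lamD = (\<lambda>x z sg. \<Sum>y\<in>LY. \<Sum>t\<in>UNIV. lamE x y t * lamD y z (t = sg))"

text \<open>Action of a channel on its input system alone (trivial ancilla).\<close>
definition act_triv :: "'a set \<Rightarrow> ('a \<Rightarrow> 'b \<Rightarrow> bool \<Rightarrow> real) \<Rightarrow> 'a vec \<Rightarrow> 'b vec" where
  "act_triv L lam v = (\<lambda>y. \<Sum>x\<in>L. v x * (lam x y True + lam x y False))"

text \<open>Action of C \<boxtimes> I_E on XE, whose pure states are (x, j, s):
  |(x j)_s) is mapped to sum lam x y t |(y j)_{t s}).\<close>
definition act_anc :: "'a set \<Rightarrow> ('a \<Rightarrow> 'b \<Rightarrow> bool \<Rightarrow> real) \<Rightarrow> ('a \<times> nat \<times> bool) vec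
     \<Rightarrow> ('b \<times> nat \<times> bool) vec" where
  "act_anc L lam v = (\<lambda>(y, j, sg). \<Sum>x\<in>L. \<Sum>s\<in>UNIV. v (x, j, s) * lam x y (s = sg))"

definition marg :: "nat \<Rightarrow> ('a \<times> nat \<times> bool) vec \<Rightarrow> 'a vec" where
  "marg d Psi = (\<lambda>x. \<Sum>j<d. \<Sum>s\<in>UNIV. Psi (x, j, s))"

text \<open>D(sigma, C): supremum over dilations (trivial ancilla, or ancilla of any size d \<ge> 2)
  and refinements of the dilation (finite families of states summing to it).\<close>
definition disturbance :: "'a set \<Rightarrow> 'a vec \<Rightarrow> ('a \<Rightarrow> 'a \<Rightarrow> bool \<Rightarrow> real) \<Rightarrow> ereal" where
  "disturbance L sigma lam = Sup
    ({ereal (\<Sum>i\<in>I. opnorm L (\<lambda>x. act_triv L lam (G i) x - G i x)) | I G.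
        finite (I :: nat set) \<and> (\<forall>i\<in>I. G i \<in> states_on L) \<and> (\<forall>x. (\<Sum>i\<in>I. G i x) = sigma x)}
     \<union> {ereal (\<Sum>i\<in>I. opnorm (L \<times> {..<d} \<times> UNIV) (\<lambda>z. act_anc L lam (G i) z - G i z)) | d I G.
        2 \<le> d \<and> finite (I :: nat set) \<and> (\<forall>i\<in>I. G i \<in> states_on (L \<times> {..<d} \<times> UNIV))
        \<and> marg d (\<lambda>z. \<Sum>i\<in>I. G i z) = sigma})"

text \<open>Pure-state labels of A^{\<boxtimes>N} for A of size D: (i_1..i_N, s_1..s_{N-1}).
  The bibit system B^{\<boxtimes>M} is the case D = 2.\<close>
definition copies_labels :: "nat \<Rightarrow> nat \<Rightarrow> (nat list \<times> bool list) set" where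
  "copies_labels D N = {(is, ss). length is = N \<and> (\<forall>i\<in>set is. i < D) \<and> length ss = N - 1}"

definition copies_state :: "nat \<Rightarrow> (nat \<Rightarrow> real) \<Rightarrow> nat \<Rightarrow> (nat list \<times> bool list) vec" where
  "copies_state D p N = (\<lambda>(is, ss). if (is, ss) \<in> copies_labels D N
      then (\<Prod>k<N. p (is ! k)) / 2 ^ (N - 1) else 0)"

definition code_exists :: "nat \<Rightarrow> (nat \<Rightarrow> real) \<Rightarrow> nat \<Rightarrow> nat \<Rightarrow> real \<Rightarrow> bool" where
  "code_exists D p N M eps \<longleftrightarrow>
     (\<exists>lamE lamD. is_channel (copies_labels D N) (copies_labels 2 M) lamE
        \<and> is_channel (copies_labels 2 M) (copies_labels D N) lamD
        \<and> disturbance (copies_labels D N) (copies_state D p N)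
             (chan_comp (copies_labels 2 M) lamE lamD) < ereal eps)"

definition rate :: "nat \<Rightarrow> (nat \<Rightarrow> real) \<Rightarrow> nat \<Rightarrow> real \<Rightarrow> real" where
  "rate D p N eps = real (LEAST M. 1 \<le> M \<and> code_exists D p N M eps) / real N"

definition shannon :: "nat \<Rightarrow> (nat \<Rightarrow> real) \<Rightarrow> real" where
  "shannon D p = - (\<Sum>i<D. p i * log 2 (p i))"

end

theory Submission
  imports Defs
begin


definition WL :: "nat \<Rightarrow> nat \<Rightarrow> nat list set" where
  "WL D N = {is. length is = N \<and> (\<forall>i\<in>set is. i < D)}"

lemma WL_finite: "finite (WL D N)"
proof -
  have "WL D N \<subseteq> {xs. set xs \<subseteq> {..<D} \<and> length xs = N}" unfolding WL_def by auto
  then show ?thesis using finite_lists_length_eq[of "{..<D}" N] finite_subset by blast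
qed

lemma WL_card: "card (WL D N) = D ^ N"
proof -
  have "WL D N = {xs. set xs \<subseteq> {..<D} \<and> length xs = N}" unfolding WL_def by auto
  then show ?thesis using card_lists_length_eq[of "{..<D}" N] by simp
qed

lemma WL_0: "WL D 0 = {[]}" unfolding WL_def by auto

lemma WL_Suc: "WL D (Suc n) = (\<lambda>(i,xs). i # xs) ` ({..<D} \<times> WL D n)"
  unfolding WL_def by (auto simp: image_def length_Suc_conv)

lemma sum_WL_Suc: "(\<Sum>xs\<in>WL D (Suc n). g xs) = (\<Sum>i<D. \<Sum>xs\<in>WL D n. g (i # xs))"
  by (auto simp: WL_Suc sum.reindex inj_on_def sum.cartesian_product intro!: sum.cong)

definition BL :: "nat \<Rightarrow> bool list set" where "BL n = {ss. length ss = n}"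

lemma BL_finite: "finite (BL n)" and BL_card: "card (BL n) = 2 ^ n"
proof -
  have "BL n = {xs. set xs \<subseteq> UNIV \<and> length xs = n}" unfolding BL_def by auto
  then show "finite (BL n)" "card (BL n) = 2 ^ n"
    using card_lists_length_eq[of "UNIV::bool set" n] finite_lists_length_eq[of "UNIV::bool set" n]
    by (auto simp: card_UNIV_bool)
qed

lemma labels_eq: "copies_labels D N = WL D N \<times> BL (N - 1)"
  unfolding copies_labels_def WL_def BL_def by auto

lemma labels_finite: "finite (copies_labels D N)"
  by (simp add: labels_eq WL_finite BL_finite)

lemma labels_card: "card (copies_labels D N) = D ^ N * 2 ^ (N - 1)"
  by (simp add: labels_eq WL_finite BL_finite card_cartesian_product WL_card BL_card)

lemma sum_bool: "(\<Sum>s\<in>(UNIV::bool set). g s) = g True + g False"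
  by (simp add: UNIV_bool add.commute)

lemma prod_list_nonneg': "(\<forall>x\<in>set xs. 0 \<le> p x) \<Longrightarrow> 0 \<le> prod_list (map p xs)"
  for p :: "nat \<Rightarrow> real" by (induction xs) auto

context
  fixes D :: nat and p f :: "nat \<Rightarrow> real" and H V :: real
  assumes psum: "(\<Sum>i<D. p i) = 1"
    and Hdef: "H = (\<Sum>i<D. p i * f i)"
    and Vdef: "V = (\<Sum>i<D. p i * (f i - H)^2)"
begin

lemma sumP: "(\<Sum>xs\<in>WL D n. prod_list (map p xs)) = 1"
proof (induction n)
  case 0 then show ?case by (simp add: WL_0)
next
  case (Suc n)
  have "(\<Sum>xs\<in>WL D (Suc n). prod_list (map p xs)) = (\<Sum>i<D. p i * (\<Sum>xs\<in>WL D n. prod_list (map p xs)))"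
    by (simp add: sum_WL_Suc sum_distrib_left)
  then show ?case using Suc psum by simp
qed

lemma sumPS: "(\<Sum>xs\<in>WL D n. prod_list (map p xs) * (sum_list (map f xs) - n * H)) = 0"
proof (induction n)
  case 0 then show ?case by (simp add: WL_0)
next
  case (Suc n)
  have "(\<Sum>xs\<in>WL D (Suc n). prod_list (map p xs) * (sum_list (map f xs) - Suc n * H))
     = (\<Sum>i<D. \<Sum>xs\<in>WL D n. p i * (f i - H) * prod_list (map p xs) + p i * (prod_list (map p xs) * (sum_list (map f xs) - n * H)))"
    by (simp add: sum_WL_Suc algebra_simps)
  also have "\<dots> = (\<Sum>i<D. p i * (f i - H) * (\<Sum>xs\<in>WL D n. prod_list (map p xs)) + p i * (\<Sum>xs\<in>WL D n. prod_list (map p xs) * (sum_list (map f xs) - n * H)))"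
    by (simp add: sum.distrib sum_distrib_left)
  also have "\<dots> = (\<Sum>i<D. p i * f i) - H * (\<Sum>i<D. p i)"
    using Suc by (simp add: sumP algebra_simps sum_subtractf sum_distrib_left)
  also have "\<dots> = 0" using Hdef psum by simp
  finally show ?case .
qed

lemma sumPS2: "(\<Sum>xs\<in>WL D n. prod_list (map p xs) * (sum_list (map f xs) - n * H)^2) = n * V"
proof (induction n)
  case 0 then show ?case by (simp add: WL_0)
next
  case (Suc n)
  let ?P = "\<lambda>xs. prod_list (map p xs)" and ?S = "\<lambda>xs. sum_list (map f xs) - n * H"
  have "(\<Sum>xs\<in>WL D (Suc n). prod_list (map p xs) * (sum_list (map f xs) - Suc n * H)^2)
     = (\<Sum>i<D. \<Sum>xs\<in>WL D n. p i * (f i - H)^2 * ?P xs + 2 * p i * (f i - H) * (?P xs * ?S xs) + p i * (?P xs * ?S xs ^ 2))"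
    by (simp add: sum_WL_Suc power2_eq_square algebra_simps)
  also have "\<dots> = (\<Sum>i<D. p i * (f i - H)^2 * (\<Sum>xs\<in>WL D n. ?P xs) + 2 * p i * (f i - H) * (\<Sum>xs\<in>WL D n. ?P xs * ?S xs) + p i * (\<Sum>xs\<in>WL D n. ?P xs * ?S xs ^ 2))"
    by (simp add: sum.distrib sum_distrib_left)
  also have "\<dots> = V + n * V"
    using Suc by (simp add: sumP sumPS Vdef sum.distrib psum flip: sum_distrib_right)
  finally show ?case by (simp add: algebra_simps)
qed

lemma cheb:
  assumes "n > 0" "\<delta> > 0" "\<forall>i<D. 0 \<le> p i"
  shows "(\<Sum>xs\<in>{xs\<in>WL D n. n * \<delta> \<le> \<bar>sum_list (map f xs) - n * H\<bar>}. prod_list (map p xs)) \<le> V / (n * \<delta>^2)"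
proof -
  have Pnn: "prod_list (map p xs) \<ge> 0" if "xs \<in> WL D n" for xs
    using that assms(3) prod_list_nonneg'[of xs p] unfolding WL_def by auto
  have "(\<Sum>xs\<in>{xs\<in>WL D n. n * \<delta> \<le> \<bar>sum_list (map f xs) - n * H\<bar>}. prod_list (map p xs))
     \<le> (\<Sum>xs\<in>{xs\<in>WL D n. n * \<delta> \<le> \<bar>sum_list (map f xs) - n * H\<bar>}. prod_list (map p xs) * (sum_list (map f xs) - n * H)^2 / (n * \<delta>)^2)"
  proof (rule sum_mono)
    fix xs assume xs: "xs \<in> {xs\<in>WL D n. n * \<delta> \<le> \<bar>sum_list (map f xs) - n * H\<bar>}"
    have pos: "0 < n * \<delta>" using assms by simp
    have "(n * \<delta>)^2 \<le> (sum_list (map f xs) - n * H)^2"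
      using xs pos by (metis (mono_tags, lifting) abs_le_square_iff abs_of_pos mem_Collect_eq)
    then have one: "1 \<le> (sum_list (map f xs) - n * H)^2 / (n * \<delta>)^2" using pos assms by (simp add: le_divide_eq)
    then show "prod_list (map p xs) \<le> prod_list (map p xs) * (sum_list (map f xs) - n * H)^2 / (n * \<delta>)^2"
      using mult_left_mono[OF one Pnn[of xs]] xs by simp
  qed
  also have "\<dots> \<le> (\<Sum>xs\<in>WL D n. prod_list (map p xs) * (sum_list (map f xs) - n * H)^2 / (n * \<delta>)^2)"
    by (rule sum_mono2) (auto simp: WL_finite Pnn)
  also have "\<dots> = n * V / (n * \<delta>)^2"
    by (simp add: sumPS2 flip: sum_divide_distrib)
  also have "\<dots> = V / (n * \<delta>^2)" using assms by (simp add: power2_eq_square)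
  finally show ?thesis .
qed

end

lemma cs_eq: "copies_state D p N (xs, ss) =
   (if xs \<in> WL D N \<and> ss \<in> BL (N - 1) then prod_list (map p xs) / 2 ^ (N - 1) else 0)"
proof -
  have "(\<Prod>k<N. p (xs ! k)) = prod_list (map p xs)" if "length xs = N"
    using that by (simp add: prod.list_conv_set_nth atLeast0LessThan)
  then show ?thesis unfolding copies_state_def
    using labels_eq[of D N] by (auto simp: WL_def)
qed

lemma cs_nonneg: "\<forall>i<D. 0 \<le> p i \<Longrightarrow> 0 \<le> copies_state D p N x"
  by (cases x) (auto simp: cs_eq WL_def intro!: divide_nonneg_nonneg prod_list_nonneg')

lemma cs_out: "x \<notin> copies_labels D N \<Longrightarrow> copies_state D p N x = 0"
  by (cases x) (auto simp: copies_state_def)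

lemma mass: "(\<Sum>x\<in>copies_labels D N. if Q (fst x) then copies_state D p N x else 0)
   = (\<Sum>xs\<in>{xs\<in>WL D N. Q xs}. prod_list (map p xs))"
proof -
  have "(\<Sum>x\<in>copies_labels D N. if Q (fst x) then copies_state D p N x else 0)
    = (\<Sum>(xs,ss)\<in>WL D N \<times> BL (N - 1). if Q xs then copies_state D p N (xs,ss) else 0)"
    unfolding labels_eq by (rule sum.cong) (auto simp: case_prod_beta)
  also have "\<dots> = (\<Sum>xs\<in>WL D N. \<Sum>ss\<in>BL (N - 1). if Q xs then copies_state D p N (xs,ss) else 0)"
    by (simp add: sum.cartesian_product)
  also have "\<dots> = (\<Sum>xs\<in>WL D N. \<Sum>ss\<in>BL (N - 1). if Q xs then prod_list (map p xs) / 2 ^ (N - 1) else 0)"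
    by (intro sum.cong refl) (simp add: cs_eq)
  also have "\<dots> = (\<Sum>xs\<in>WL D N. if Q xs then prod_list (map p xs) else 0)"
    by (intro sum.cong refl) (simp add: BL_card)
  also have "\<dots> = (\<Sum>xs\<in>{xs\<in>WL D N. Q xs}. prod_list (map p xs))"
    by (simp add: sum.inter_filter WL_finite)
  finally show ?thesis .
qed

lemma P_powr: "(\<forall>x\<in>set xs. 0 < p x) \<Longrightarrow>
  prod_list (map p xs) = 2 powr (- sum_list (map (\<lambda>i. - log 2 (p i)) xs))"
proof (induction xs)
  case Nil then show ?case by simp
next
  case (Cons a xs)
  have "p a = 2 powr (log 2 (p a))" using Cons by simp
  then show ?case using Cons by (simp add: powr_diff powr_minus divide_inverse)
qed

lemma P_pos_all: "prod_list (map p xs) \<noteq> 0 \<Longrightarrow> \<forall>x\<in>set xs. p x \<noteq> 0"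
  for p :: "nat \<Rightarrow> real" by (induction xs) auto



lemma sum_L3: "finite L \<Longrightarrow> (\<Sum>z\<in>L \<times> {..<d} \<times> (UNIV::bool set). g z)
   = (\<Sum>y\<in>L. \<Sum>j<d. g (y, j, True) + g (y, j, False))"
proof -
  have "sum g (L \<times> {..<d} \<times> (UNIV::bool set)) = (\<Sum>y\<in>L. \<Sum>q\<in>{..<d} \<times> (UNIV::bool set). g (y,q))"
    by (simp add: sum.cartesian_product case_prod_beta)
  also have "\<dots> = (\<Sum>y\<in>L. \<Sum>j<d. \<Sum>s\<in>(UNIV::bool set). g (y,j,s))"
    by (simp add: sum.cartesian_product case_prod_beta)
  finally show ?thesis by (simp add: sum_bool)
qed

lemma sum_restr: "finite A \<Longrightarrow> B \<subseteq> A \<Longrightarrow> (\<Sum>x\<in>A. if x \<in> B then g x else 0) = sum g B"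
  by (metis Int_absorb1 sum.inter_restrict)

lemma chan_sum: "is_channel L1 L2 C \<Longrightarrow> x \<in> L1 \<Longrightarrow> (\<Sum>y\<in>L2. C x y True + C x y False) = 1"
  and chan_nn: "is_channel L1 L2 C \<Longrightarrow> 0 \<le> C x y t"
  unfolding is_channel_def by (cases "x \<in> L1"; auto)+

lemma piece_triv:
  assumes fin: "finite L" and TL: "T \<subseteq> L" and ch: "is_channel L L C"
    and hT: "\<forall>x\<in>T. \<forall>z sg. C x z sg = (if z = x \<and> sg then 1 else 0)"
    and v: "v \<in> states_on L"
  shows "opnorm L (\<lambda>x. act_triv L C v x - v x) \<le> 2 * (\<Sum>x\<in>L-T. v x)"
proof -
  define c where "c x y = C x y True + C x y False" for x y
  have vnn: "0 \<le> v x" for x using v unfolding states_on_def by auto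
  have cnn: "0 \<le> c x y" for x y unfolding c_def using chan_nn[OF ch] by (simp add: add_nonneg_nonneg)
  have cT: "x \<in> T \<Longrightarrow> c x y = (if y = x then 1 else 0)" for x y using hT unfolding c_def by auto
  define R where "R y = (\<Sum>x\<in>L-T. v x * c x y)" for y
  have Rnn: "0 \<le> R y" for y unfolding R_def using vnn cnn by (simp add: sum_nonneg)
  have finT: "finite T" using fin TL finite_subset by blast
  have act: "act_triv L C v y = (if y \<in> T then v y else 0) + R y" for y
  proof -
    have "act_triv L C v y = (\<Sum>x\<in>L. v x * c x y)" unfolding act_triv_def c_def by simp
    also have "\<dots> = (\<Sum>x\<in>L-T. v x * c x y) + (\<Sum>x\<in>T. v x * c x y)"
      using sum.subset_diff[OF TL fin] by simp
    also have "(\<Sum>x\<in>T. v x * c x y) = (\<Sum>x\<in>T. if y = x then v x else 0)"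
      by (rule sum.cong) (auto simp: cT)
    also have "\<dots> = (if y \<in> T then v y else 0)" using finT by simp
    finally show ?thesis unfolding R_def by simp
  qed
  have bd: "\<bar>act_triv L C v y - v y\<bar> \<le> R y + (if y \<in> L - T then v y else 0)" if "y \<in> L" for y
    using that act[of y] Rnn[of y] vnn[of y] by auto
  have "opnorm L (\<lambda>x. act_triv L C v x - v x) \<le> (\<Sum>y\<in>L. R y + (if y \<in> L - T then v y else 0))"
    unfolding opnorm_def using bd by (intro sum_mono) auto
  also have "\<dots> = (\<Sum>y\<in>L. R y) + (\<Sum>y\<in>L-T. v y)"
    by (subst sum.distrib, subst sum_restr[OF fin]) auto
  also have "(\<Sum>y\<in>L. R y) = (\<Sum>x\<in>L-T. v x * (\<Sum>y\<in>L. c x y))"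
    unfolding R_def by (subst sum.swap) (simp add: sum_distrib_left)
  also have "\<dots> = (\<Sum>x\<in>L-T. v x)"
    by (rule sum.cong) (auto simp: c_def chan_sum[OF ch])
  finally show ?thesis by simp
qed

lemma piece_anc:
  assumes fin: "finite L" and TL: "T \<subseteq> L" and ch: "is_channel L L C"
    and hT: "\<forall>x\<in>T. \<forall>z sg. C x z sg = (if z = x \<and> sg then 1 else 0)"
    and v: "v \<in> states_on (L \<times> {..<d} \<times> UNIV)"
  shows "opnorm (L \<times> {..<d} \<times> UNIV) (\<lambda>z. act_anc L C v z - v z) \<le> 2 * (\<Sum>x\<in>L-T. marg d v x)"
proof -
  define c where "c x y = C x y True + C x y False" for x y
  define w where "w x j = v (x, j, True) + v (x, j, False)" for x j
  have vnn: "0 \<le> v x" for x using v unfolding states_on_def by (cases x) auto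
  have cnn: "0 \<le> C x y t" for x y t using chan_nn[OF ch] by simp
  have finT: "finite T" using fin TL finite_subset by blast
  define R where "R y j sg = (\<Sum>x\<in>L-T. \<Sum>s\<in>UNIV. v (x, j, s) * C x y (s = sg))" for y j sg
  have Rnn: "0 \<le> R y j sg" for y j sg unfolding R_def using vnn cnn
    by (intro sum_nonneg) (simp add: sum_bool)
  have act: "act_anc L C v (y, j, sg) = (if y \<in> T then v (y, j, sg) else 0) + R y j sg" for y j sg
  proof -
    let ?g = "\<lambda>x. \<Sum>s\<in>UNIV. v (x, j, s) * C x y (s = sg)"
    have "act_anc L C v (y, j, sg) = (\<Sum>x\<in>L. ?g x)" unfolding act_anc_def by simp
    also have "\<dots> = (\<Sum>x\<in>L-T. ?g x) + (\<Sum>x\<in>T. ?g x)"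
      using sum.subset_diff[OF TL fin] by simp
    also have "(\<Sum>x\<in>T. ?g x) = (\<Sum>x\<in>T. if y = x then v (x, j, sg) else 0)"
      by (rule sum.cong) (use hT in \<open>auto simp: sum_bool\<close>)
    also have "\<dots> = (if y \<in> T then v (y, j, sg) else 0)" using finT by simp
    finally show ?thesis unfolding R_def by simp
  qed
  have RR: "R y j True + R y j False = (\<Sum>x\<in>L-T. w x j * c x y)" for y j
    unfolding R_def w_def c_def by (simp add: sum_bool sum.distrib[symmetric] algebra_simps)
  have bd: "\<bar>act_anc L C v z - v z\<bar> \<le> R (fst z) (fst (snd z)) (snd (snd z)) + (if fst z \<in> L - T then v z else 0)"
    if "z \<in> L \<times> {..<d} \<times> UNIV" for z
  proof -
    obtain y j sg where z: "z = (y, j, sg)" by (cases z) auto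
    show ?thesis using that act[of y j sg] Rnn[of y j sg] vnn[of z] unfolding z by auto
  qed
  have "opnorm (L \<times> {..<d} \<times> UNIV) (\<lambda>z. act_anc L C v z - v z)
     \<le> (\<Sum>z\<in>L \<times> {..<d} \<times> UNIV. R (fst z) (fst (snd z)) (snd (snd z)) + (if fst z \<in> L - T then v z else 0))"
    unfolding opnorm_def using bd by (intro sum_mono) auto
  also have "\<dots> = (\<Sum>y\<in>L. \<Sum>j<d. (\<Sum>x\<in>L-T. w x j * c x y) + (if y \<in> L - T then w y j else 0))"
    by (subst sum_L3[OF fin], intro sum.cong refl, subst RR[symmetric], auto simp: w_def)
  also have "\<dots> = (\<Sum>y\<in>L. \<Sum>j<d. \<Sum>x\<in>L-T. w x j * c x y) + (\<Sum>y\<in>L. if y \<in> L - T then (\<Sum>j<d. w y j) else 0)"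
    by (simp only: sum.distrib) (intro arg_cong2[where f="(+)"] refl sum.cong, simp)
  also have "(\<Sum>y\<in>L. if y \<in> L - T then (\<Sum>j<d. w y j) else 0) = (\<Sum>y\<in>L-T. \<Sum>j<d. w y j)"
    by (rule sum_restr[OF fin]) auto
  also have "(\<Sum>y\<in>L. \<Sum>j<d. \<Sum>x\<in>L-T. w x j * c x y) = (\<Sum>x\<in>L-T. \<Sum>j<d. w x j * (\<Sum>y\<in>L. c x y))"
  proof -
    have "(\<Sum>y\<in>L. \<Sum>j<d. \<Sum>x\<in>L-T. w x j * c x y) = (\<Sum>j<d. \<Sum>y\<in>L. \<Sum>x\<in>L-T. w x j * c x y)"
      by (rule sum.swap)
    also have "\<dots> = (\<Sum>j<d. \<Sum>x\<in>L-T. \<Sum>y\<in>L. w x j * c x y)"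
      by (rule sum.cong[OF refl]) (rule sum.swap)
    also have "\<dots> = (\<Sum>x\<in>L-T. \<Sum>j<d. \<Sum>y\<in>L. w x j * c x y)"
      by (rule sum.swap)
    finally show ?thesis by (simp only: sum_distrib_left)
  qed
  also have "\<dots> = (\<Sum>x\<in>L-T. \<Sum>j<d. w x j)"
    by (intro sum.cong refl) (auto simp: c_def chan_sum[OF ch])
  also have "(\<Sum>x\<in>L-T. \<Sum>j<d. w x j) = (\<Sum>x\<in>L-T. marg d v x)"
    unfolding marg_def w_def by (simp add: sum_bool)
  finally show ?thesis by simp
qed

lemma comp_c: "chan_comp L2 E Dc x z True + chan_comp L2 E Dc x z False
   = (\<Sum>y\<in>L2. (E x y True + E x y False) * (Dc y z True + Dc y z False))"
  unfolding chan_comp_def by (simp add: sum_bool sum.distrib[symmetric] algebra_simps)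

lemma comp_channel:
  assumes fin3: "finite L3" and e: "is_channel L1 L2 E" and d: "is_channel L2 L3 Dc"
  shows "is_channel L1 L3 (chan_comp L2 E Dc)"
proof -
  have nn: "0 \<le> chan_comp L2 E Dc x z sg" for x z sg
    unfolding chan_comp_def using chan_nn[OF e] chan_nn[OF d]
    by (intro sum_nonneg) (simp add: sum_bool)
  have out: "chan_comp L2 E Dc x z sg = 0" if "z \<notin> L3" for x z sg
  proof -
    have "Dc y z t = 0" if "y \<in> L2" for y t using d \<open>z \<notin> L3\<close> that unfolding is_channel_def by blast
    then show ?thesis unfolding chan_comp_def by simp
  qed
  have out1: "chan_comp L2 E Dc x z sg = 0" if "x \<notin> L1" for x z sg
    using e that unfolding is_channel_def chan_comp_def by simp
  have sm: "(\<Sum>z\<in>L3. chan_comp L2 E Dc x z True + chan_comp L2 E Dc x z False) = 1" if "x \<in> L1" for x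
  proof -
    have "(\<Sum>z\<in>L3. chan_comp L2 E Dc x z True + chan_comp L2 E Dc x z False)
        = (\<Sum>z\<in>L3. \<Sum>y\<in>L2. (E x y True + E x y False) * (Dc y z True + Dc y z False))"
      by (simp add: comp_c)
    also have "\<dots> = (\<Sum>y\<in>L2. (E x y True + E x y False) * (\<Sum>z\<in>L3. Dc y z True + Dc y z False))"
      by (subst sum.swap) (simp add: sum_distrib_left)
    also have "\<dots> = (\<Sum>y\<in>L2. (E x y True + E x y False))"
      by (intro sum.cong refl) (simp add: chan_sum[OF d])
    also have "\<dots> = 1" using chan_sum[OF e that] .
    finally show ?thesis .
  qed
  show ?thesis unfolding is_channel_def using nn out out1 sm by blast
qed

lemma dist_le:
  assumes fin: "finite L" and TL: "T \<subseteq> L" and ch: "is_channel L L C"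
    and hT: "\<forall>x\<in>T. \<forall>z sg. C x z sg = (if z = x \<and> sg then 1 else 0)"
  shows "disturbance L sigma C \<le> ereal (2 * (\<Sum>x\<in>L-T. sigma x))"
  unfolding disturbance_def
proof (rule Sup_least, elim UnE)
  fix a assume "a \<in> {ereal (\<Sum>i\<in>I. opnorm L (\<lambda>x. act_triv L C (G i) x - G i x)) | I G.
        finite (I :: nat set) \<and> (\<forall>i\<in>I. G i \<in> states_on L) \<and> (\<forall>x. (\<Sum>i\<in>I. G i x) = sigma x)}"
  then obtain I G where a: "a = ereal (\<Sum>i\<in>I. opnorm L (\<lambda>x. act_triv L C (G i) x - G i x))"
    and I: "finite (I :: nat set)" and G: "\<forall>i\<in>I. G i \<in> states_on L" and s: "\<forall>x. (\<Sum>i\<in>I. G i x) = sigma x"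
    by blast
  have "(\<Sum>i\<in>I. opnorm L (\<lambda>x. act_triv L C (G i) x - G i x)) \<le> (\<Sum>i\<in>I. 2 * (\<Sum>x\<in>L-T. G i x))"
    using piece_triv[OF fin TL ch hT] G by (intro sum_mono) auto
  also have "\<dots> = 2 * (\<Sum>x\<in>L-T. \<Sum>i\<in>I. G i x)"
    by (simp add: sum_distrib_left[symmetric]) (rule sum.swap)
  also have "\<dots> = 2 * (\<Sum>x\<in>L-T. sigma x)" using s by simp
  finally show "a \<le> ereal (2 * (\<Sum>x\<in>L-T. sigma x))" using a by simp
next
  fix a assume "a \<in> {ereal (\<Sum>i\<in>I. opnorm (L \<times> {..<d} \<times> UNIV) (\<lambda>z. act_anc L C (G i) z - G i z)) | d I G.
        2 \<le> d \<and> finite (I :: nat set) \<and> (\<forall>i\<in>I. G i \<in> states_on (L \<times> {..<d} \<times> UNIV))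
        \<and> marg d (\<lambda>z. \<Sum>i\<in>I. G i z) = sigma}"
  then obtain d I G where a: "a = ereal (\<Sum>i\<in>I. opnorm (L \<times> {..<d} \<times> UNIV) (\<lambda>z. act_anc L C (G i) z - G i z))"
    and I: "finite (I :: nat set)" and G: "\<forall>i\<in>I. G i \<in> states_on (L \<times> {..<d} \<times> UNIV)"
    and s: "marg d (\<lambda>z. \<Sum>i\<in>I. G i z) = sigma"
    by blast
  have lin: "(\<Sum>i\<in>I. marg d (G i) x) = sigma x" for x
  proof -
    have "(\<Sum>i\<in>I. marg d (G i) x) = (\<Sum>i\<in>I. \<Sum>j<d. G i (x, j, True) + G i (x, j, False))"
      unfolding marg_def by (simp add: sum_bool)
    also have "\<dots> = (\<Sum>j<d. \<Sum>i\<in>I. G i (x, j, True) + G i (x, j, False))" by (rule sum.swap)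
    also have "\<dots> = marg d (\<lambda>z. \<Sum>i\<in>I. G i z) x"
      unfolding marg_def by (simp add: sum_bool sum.distrib)
    finally show ?thesis using s by simp
  qed
  have "(\<Sum>i\<in>I. opnorm (L \<times> {..<d} \<times> UNIV) (\<lambda>z. act_anc L C (G i) z - G i z))
     \<le> (\<Sum>i\<in>I. 2 * (\<Sum>x\<in>L-T. marg d (G i) x))"
    using piece_anc[OF fin TL ch hT] G by (intro sum_mono) auto
  also have "\<dots> = 2 * (\<Sum>x\<in>L-T. \<Sum>i\<in>I. marg d (G i) x)"
    by (simp add: sum_distrib_left[symmetric]) (rule sum.swap)
  also have "\<dots> = 2 * (\<Sum>x\<in>L-T. sigma x)" using lin by simp
  finally show "a \<le> ereal (2 * (\<Sum>x\<in>L-T. sigma x))" using a by simp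
qed



lemma conv_elem:
  assumes fin: "finite L" and sig: "\<forall>x. 0 \<le> sigma x" and out: "\<forall>x. x \<notin> L \<longrightarrow> sigma x = 0"
    and dist: "disturbance L sigma C < ereal eps"
  shows "(\<Sum>x\<in>L. sigma x * (1 - (C x x True + C x x False))) < eps"
proof -
  obtain h where h: "bij_betw h {0..<card L} L" using ex_bij_betw_nat_finite[OF fin] by blast
  have hL: "h i \<in> L" if "i \<in> {0..<card L}" for i using h that bij_betwE by blast
  define G where "G i = (\<lambda>z. if z = h i then sigma (h i) else 0)" for i
  define c where "c x y = C x y True + C x y False" for x y
  have GS: "\<forall>i\<in>{0..<card L}. G i \<in> states_on L"
    using hL sig unfolding G_def states_on_def by auto
  have Gsum: "\<forall>x. (\<Sum>i\<in>{0..<card L}. G i x) = sigma x"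
  proof
    fix x
    have "(\<Sum>i\<in>{0..<card L}. G i x) = (\<Sum>i\<in>{0..<card L}. (\<lambda>y. if x = y then sigma y else 0) (h i))"
      unfolding G_def by (intro sum.cong refl)
    also have "\<dots> = (\<Sum>y\<in>L. if x = y then sigma y else 0)"
      by (rule sum.reindex_bij_betw[OF h])
    also have "\<dots> = sigma x" using fin out by auto
    finally show "(\<Sum>i\<in>{0..<card L}. G i x) = sigma x" .
  qed
  let ?e = "\<Sum>i\<in>{0..<card L}. opnorm L (\<lambda>x. act_triv L C (G i) x - G i x)"
  have "ereal ?e \<le> disturbance L sigma C"
    unfolding disturbance_def
    by (rule Sup_upper, rule UnI1) (use GS Gsum in blast)
  from le_less_trans[OF this dist] have "ereal ?e < ereal eps" .
  then have e: "?e < eps" by simp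
  have piece: "sigma (h i) * (1 - c (h i) (h i)) \<le> opnorm L (\<lambda>x. act_triv L C (G i) x - G i x)"
    if i: "i \<in> {0..<card L}" for i
  proof -
    have act: "act_triv L C (G i) y = sigma (h i) * c (h i) y" for y
    proof -
      have "act_triv L C (G i) y = (\<Sum>x\<in>L. if x = h i then sigma (h i) * c (h i) y else 0)"
        unfolding act_triv_def G_def c_def by (intro sum.cong refl) auto
      also have "\<dots> = sigma (h i) * c (h i) y" using fin hL[OF i] by simp
      finally show ?thesis .
    qed
    have "sigma (h i) * (1 - c (h i) (h i)) \<le> \<bar>act_triv L C (G i) (h i) - G i (h i)\<bar>"
      unfolding act using abs_ge_minus_self[of "sigma (h i) * c (h i) (h i) - sigma (h i)"]
      by (simp add: G_def algebra_simps)
    also have "\<dots> \<le> opnorm L (\<lambda>x. act_triv L C (G i) x - G i x)"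
      unfolding opnorm_def using hL[OF i] fin by (intro member_le_sum) auto
    finally show ?thesis .
  qed
  have "(\<Sum>x\<in>L. sigma x * (1 - c x x)) = (\<Sum>i\<in>{0..<card L}. sigma (h i) * (1 - c (h i) (h i)))"
    by (rule sum.reindex_bij_betw[OF h, symmetric])
  also have "\<dots> \<le> ?e" using piece by (intro sum_mono) auto
  finally show ?thesis using e unfolding c_def by simp
qed



definition Sf :: "(nat \<Rightarrow> real) \<Rightarrow> nat list \<Rightarrow> real" where
  "Sf p xs = sum_list (map (\<lambda>i. - log 2 (p i)) xs)"

definition Vp :: "nat \<Rightarrow> (nat \<Rightarrow> real) \<Rightarrow> real" where
  "Vp D p = (\<Sum>i<D. p i * (- log 2 (p i) - shannon D p)^2)"

context
  fixes D :: nat and p :: "nat \<Rightarrow> real"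
  assumes D2: "2 \<le> D" and pnn: "\<forall>i<D. 0 \<le> p i" and psum: "(\<Sum>i<D. p i) = 1"
begin

lemma Hdef': "shannon D p = (\<Sum>i<D. p i * (- log 2 (p i)))"
  unfolding shannon_def by (simp add: sum_negf[symmetric])

lemma cheb': "N > 0 \<Longrightarrow> \<delta> > 0 \<Longrightarrow>
  (\<Sum>xs\<in>{xs\<in>WL D N. N * \<delta> \<le> \<bar>Sf p xs - N * shannon D p\<bar>}. prod_list (map p xs)) \<le> Vp D p / (N * \<delta>^2)"
  using cheb[OF psum Hdef' Vp_def, of N \<delta>] pnn unfolding Sf_def by simp

lemma Vp_nn: "0 \<le> Vp D p" unfolding Vp_def using pnn by (intro sum_nonneg) simp

lemma sigma_total: "(\<Sum>x\<in>copies_labels D N. copies_state D p N x) = 1"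
  using mass[where Q="\<lambda>_. True" and D=D and N=N and p=p] sumP[OF psum Hdef' Vp_def] by simp

lemma sigma_at: "x \<in> copies_labels D N \<Longrightarrow> copies_state D p N x = prod_list (map p (fst x)) / 2 ^ (N - 1)"
  by (cases x) (simp add: cs_eq labels_eq)

lemma P_nn: "x \<in> copies_labels D N \<Longrightarrow> 0 \<le> prod_list (map p (fst x))"
  by (cases x) (auto simp: labels_eq WL_def intro!: prod_list_nonneg' pnn[rule_format])

lemma P_pos_powr: "x \<in> copies_labels D N \<Longrightarrow> prod_list (map p (fst x)) > 0 \<Longrightarrow>
   prod_list (map p (fst x)) = 2 powr (- Sf p (fst x))"
proof -
  assume x: "x \<in> copies_labels D N" and pos: "prod_list (map p (fst x)) > 0"
  have "\<forall>i\<in>set (fst x). p i \<noteq> 0" using P_pos_all[of p "fst x"] pos by simp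
  moreover have "\<forall>i\<in>set (fst x). 0 \<le> p i" using x pnn by (cases x) (auto simp: labels_eq WL_def)
  ultimately have "\<forall>i\<in>set (fst x). 0 < p i" by force
  then show ?thesis using P_powr unfolding Sf_def by blast
qed


lemma converse:
  assumes N1: "1 \<le> N" and dpos: "\<delta> > 0" and V4: "Vp D p / (N * \<delta>^2) \<le> 1/4"
    and eps: "eps < 1/2" and ce: "code_exists D p N M eps"
  shows "N * (shannon D p + 1 - \<delta>) - 3 < 2 * M"
proof -
  let ?L = "copies_labels D N" and ?K = "copies_labels 2 M" and ?s = "copies_state D p N"
  let ?H = "shannon D p"
  obtain E Dc where E: "is_channel ?L ?K E" and Dc: "is_channel ?K ?L Dc"
    and dist: "disturbance ?L ?s (chan_comp ?K E Dc) < ereal eps"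
    using ce unfolding code_exists_def by blast
  define C where "C = chan_comp ?K E Dc"
  define c where "c x = C x x True + C x x False" for x
  have finL: "finite ?L" and finK: "finite ?K" by (simp_all add: labels_finite)
  have chC: "is_channel ?L ?L C" unfolding C_def by (rule comp_channel[OF finL E Dc])
  have snn: "\<forall>x. 0 \<le> ?s x" using cs_nonneg pnn by blast
  have sout: "\<forall>x. x \<notin> ?L \<longrightarrow> ?s x = 0" using cs_out by blast
  have ce1: "(\<Sum>x\<in>?L. ?s x * (1 - c x)) < eps"
    using conv_elem[OF finL snn sout dist] unfolding c_def C_def .
  have "(\<Sum>x\<in>?L. ?s x * (1 - c x)) = 1 - (\<Sum>x\<in>?L. ?s x * c x)"
    using sigma_total[of N] by (simp add: algebra_simps sum_subtractf)
  with ce1 eps have big: "1/2 < (\<Sum>x\<in>?L. ?s x * c x)" by simp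
  have cnn: "0 \<le> c x" for x unfolding c_def using chan_nn[OF chC] by (simp add: add_nonneg_nonneg)
  have cle: "c x \<le> 1" if "x \<in> ?L" for x
  proof -
    have "c x \<le> (\<Sum>z\<in>?L. C x z True + C x z False)"
      unfolding c_def using that finL chan_nn[OF chC]
      by (intro member_le_sum[where f="\<lambda>z. C x z True + C x z False"]) (auto simp: add_nonneg_nonneg)
    then show ?thesis using chan_sum[OF chC that] by simp
  qed
  define \<theta> where "\<theta> = 2 powr (- (N * (?H - \<delta>))) / 2 ^ (N - 1)"
  have th0: "0 \<le> \<theta>" unfolding \<theta>_def by simp
  define Q where "Q xs = (N * \<delta> \<le> \<bar>Sf p xs - N * ?H\<bar>)" for xs
  have pw: "?s x * c x \<le> \<theta> * c x + (if Q (fst x) then ?s x else 0)" if x: "x \<in> ?L" for x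
  proof (cases "?s x \<le> \<theta>")
    case True
    then have "?s x * c x \<le> \<theta> * c x" using cnn by (simp add: mult_right_mono)
    moreover have "0 \<le> ?s x" using snn by blast
    ultimately show ?thesis by simp
  next
    case False
    have sx: "?s x = prod_list (map p (fst x)) / 2 ^ (N - 1)" using sigma_at[OF x] .
    from False have gt: "2 powr (- (N * (?H - \<delta>))) < prod_list (map p (fst x))"
      unfolding \<theta>_def sx by (simp add: divide_le_cancel not_le)
    then have pos: "prod_list (map p (fst x)) > 0" by (smt (verit) powr_gt_zero)
    have "2 powr (- (N * (?H - \<delta>))) < 2 powr (- Sf p (fst x))"
      using gt P_pos_powr[OF x pos] by simp
    then have "- (N * (?H - \<delta>)) < - Sf p (fst x)" by simp
    then have "Q (fst x)" unfolding Q_def by (simp add: algebra_simps)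
    moreover have "?s x * c x \<le> ?s x" using cle[OF x] snn mult_left_le by blast
    ultimately show ?thesis using th0 cnn by (simp add: add_increasing)
  qed
  have sumc: "(\<Sum>x\<in>?L. c x) \<le> card ?K"
  proof -
    have e1: "E x y True + E x y False \<le> 1" if "x \<in> ?L" "y \<in> ?K" for x y
    proof -
      have "E x y True + E x y False \<le> (\<Sum>y\<in>?K. E x y True + E x y False)"
        using that finK chan_nn[OF E]
        by (intro member_le_sum[where f="\<lambda>y. E x y True + E x y False"]) (auto simp: add_nonneg_nonneg)
      then show ?thesis using chan_sum[OF E that(1)] by simp
    qed
    have "(\<Sum>x\<in>?L. c x) = (\<Sum>x\<in>?L. \<Sum>y\<in>?K. (E x y True + E x y False) * (Dc y x True + Dc y x False))"
      unfolding c_def C_def by (simp add: comp_c)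
    also have "\<dots> \<le> (\<Sum>x\<in>?L. \<Sum>y\<in>?K. (Dc y x True + Dc y x False))"
      using e1 chan_nn[OF Dc] by (intro sum_mono mult_left_le_one_le) (auto simp: add_nonneg_nonneg chan_nn[OF E])
    also have "\<dots> = (\<Sum>y\<in>?K. \<Sum>x\<in>?L. (Dc y x True + Dc y x False))" by (rule sum.swap)
    also have "\<dots> = (\<Sum>y\<in>?K. 1)" by (intro sum.cong refl) (simp add: chan_sum[OF Dc])
    finally show ?thesis by simp
  qed
  have "(\<Sum>x\<in>?L. ?s x * c x) \<le> (\<Sum>x\<in>?L. \<theta> * c x + (if Q (fst x) then ?s x else 0))"
    using pw by (intro sum_mono) auto
  also have "\<dots> = \<theta> * (\<Sum>x\<in>?L. c x) + (\<Sum>xs\<in>{xs\<in>WL D N. Q xs}. prod_list (map p xs))"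
    by (simp add: sum.distrib sum_distrib_left mass)
  also have "\<dots> \<le> \<theta> * card ?K + Vp D p / (N * \<delta>^2)"
    using cheb'[of N \<delta>] N1 dpos sumc th0 unfolding Q_def
    by (intro add_mono mult_left_mono) auto
  finally have "1/4 < \<theta> * card ?K" using big V4 by linarith
  also have "card ?K \<le> 2 powr (2 * M)"
  proof -
    have "card ?K = (2::nat) ^ M * 2 ^ (M - 1)" by (simp add: labels_card)
    also have "\<dots> \<le> 2 ^ M * 2 ^ M" by (intro mult_left_mono power_increasing) auto
    also have "\<dots> = (2::nat) ^ (2 * M)" by (simp add: power_add[symmetric] mult_2)
    finally have "real (card ?K) \<le> 2 ^ (2 * M)" by (metis of_nat_le_iff of_nat_numeral of_nat_power)
    moreover have "2 powr (2 * real M) = (2::real) ^ (2*M)" using powr_realpow[of 2 "2*M"] by simp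
    ultimately show ?thesis by simp
  qed
  then have "\<theta> * card ?K \<le> \<theta> * 2 powr (2 * M)" using th0 by (rule mult_left_mono)
  also have "\<theta> * 2 powr (2 * M) = 2 powr (- (N * (?H - \<delta>)) - (real N - 1) + 2 * M)"
  proof -
    have e: "(2::real) ^ (N - 1) = 2 powr (real N - 1)" using N1 by (simp add: powr_realpow[symmetric] of_nat_diff)
    have "\<theta> * 2 powr (2 * M) = 2 powr (- (N * (?H - \<delta>))) / 2 powr (real N - 1) * 2 powr (2 * M)"
      unfolding \<theta>_def e ..
    also have "\<dots> = 2 powr (- (N * (?H - \<delta>)) - (real N - 1)) * 2 powr (2 * M)" by (simp only: powr_diff)
    also have "\<dots> = 2 powr (- (N * (?H - \<delta>)) - (real N - 1) + 2 * M)" by (simp only: powr_add)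
    finally show ?thesis .
  qed
  finally have "2 powr (-2) < 2 powr (- (N * (?H - \<delta>)) - (real N - 1) + 2 * M)"
    by (simp add: powr_minus_divide)
  then have "-2 < - (N * (?H - \<delta>)) - (real N - 1) + 2 * M" by simp
  then show ?thesis by (simp add: algebra_simps)
qed


lemma achieve:
  assumes N1: "1 \<le> N" and dpos: "\<delta> > 0" and epos: "eps > 0"
    and V4: "Vp D p / (N * \<delta>^2) \<le> eps / 4"
  shows "code_exists D p N (nat \<lceil>N * (shannon D p + 1 + \<delta>) / 2\<rceil> + 1) eps"
proof -
  define M where "M = nat \<lceil>N * (shannon D p + 1 + \<delta>) / 2\<rceil> + 1"
  let ?L = "copies_labels D N" and ?K = "copies_labels 2 M" and ?s = "copies_state D p N"
  let ?H = "shannon D p"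
  have finL: "finite ?L" and finK: "finite ?K" by (simp_all add: labels_finite)
  have snn: "\<forall>x. 0 \<le> ?s x" using cs_nonneg pnn by blast
  define T where "T = {x\<in>?L. prod_list (map p (fst x)) > 0 \<and> Sf p (fst x) \<le> N * (?H + \<delta>)}"
  have TL: "T \<subseteq> ?L" unfolding T_def by auto
  have finT: "finite T" using finL TL finite_subset by blast
  define m where "m = 2 powr (- (N * (?H + \<delta>))) / 2 ^ (N - 1)"
  have mpos: "0 < m" unfolding m_def by simp
  have mT: "m \<le> ?s x" if "x \<in> T" for x
  proof -
    have x: "x \<in> ?L" and pos: "prod_list (map p (fst x)) > 0" and S: "Sf p (fst x) \<le> N * (?H + \<delta>)"
      using that unfolding T_def by auto
    have "2 powr (- (N * (?H + \<delta>))) \<le> 2 powr (- Sf p (fst x))" using S by simp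
    then have "2 powr (- (N * (?H + \<delta>))) \<le> prod_list (map p (fst x))" using P_pos_powr[OF x pos] by simp
    then show ?thesis unfolding m_def sigma_at[OF x] by (simp add: divide_right_mono)
  qed
  have "real (card T) * m = (\<Sum>x\<in>T. m)" by simp
  also have "\<dots> \<le> (\<Sum>x\<in>T. ?s x)" using mT by (intro sum_mono) auto
  also have "\<dots> \<le> (\<Sum>x\<in>?L. ?s x)" using snn finL TL by (intro sum_mono2) auto
  also have "\<dots> = 1" by (rule sigma_total)
  finally have cTm: "real (card T) * m \<le> 1" .
  have M1: "1 \<le> M" unfolding M_def by simp
  have "m * card ?K = m * 2 powr (2 * real M - 1)"
  proof -
    have "card ?K = (2::nat) ^ M * 2 ^ (M - 1)" by (simp add: labels_card)
    also have "\<dots> = 2 ^ (2 * M - 1)" using M1 by (simp add: power_add[symmetric])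
    finally have "real (card ?K) = 2 ^ (2 * M - 1)" by simp
    also have "\<dots> = 2 powr (real (2 * M - 1))" by (simp add: powr_realpow)
    also have "real (2 * M - 1) = 2 * real M - 1" using M1 by (simp add: of_nat_diff)
    finally show ?thesis by simp
  qed
  also have "m * 2 powr (2 * real M - 1) = 2 powr (- (N * (?H + \<delta>)) - (real N - 1) + (2 * real M - 1))"
  proof -
    have e: "(2::real) ^ (N - 1) = 2 powr (real N - 1)" using N1 by (simp add: powr_realpow[symmetric] of_nat_diff)
    have "m * 2 powr (2 * real M - 1) = 2 powr (- (N * (?H + \<delta>))) / 2 powr (real N - 1) * 2 powr (2 * real M - 1)"
      unfolding m_def e ..
    also have "\<dots> = 2 powr (- (N * (?H + \<delta>)) - (real N - 1)) * 2 powr (2 * real M - 1)" by (simp only: powr_diff)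
    also have "\<dots> = 2 powr (- (N * (?H + \<delta>)) - (real N - 1) + (2 * real M - 1))" by (simp only: powr_add)
    finally show ?thesis .
  qed
  also have "\<dots> \<ge> 1"
  proof -
    have "real M \<ge> N * (?H + 1 + \<delta>) / 2 + 1" unfolding M_def
      using real_nat_ceiling_ge[of "N * (?H + 1 + \<delta>) / 2"] by simp
    moreover have "- (N * (?H + \<delta>)) - (real N - 1) + (2 * real M - 1) = 2 * real M - N * (?H + 1 + \<delta>)"
      by (simp add: algebra_simps)
    ultimately have "0 \<le> - (N * (?H + \<delta>)) - (real N - 1) + (2 * real M - 1)" by linarith
    then show ?thesis by (rule ge_one_powr_ge_zero[rotated]) simp
  qed
  finally have "1 \<le> m * card ?K" .
  then have "real (card T) * m \<le> real (card ?K) * m" using cTm by (simp add: mult.commute)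
  then have "real (card T) \<le> real (card ?K)" using mpos by (rule mult_right_le_imp_le)
  then have cTK: "card T \<le> card ?K" by simp
  obtain fT where fT: "fT ` T \<subseteq> ?K" "inj_on fT T" using card_le_inj[OF finT finK cTK] by blast
  define g where "g = inv_into T fT"
  define x0 where "x0 = (replicate N (0::nat), replicate (N - 1) True)"
  define y0 where "y0 = (replicate M (0::nat), replicate (M - 1) True)"
  have x0: "x0 \<in> ?L" unfolding x0_def copies_labels_def using D2 by auto
  have y0: "y0 \<in> ?K" unfolding y0_def copies_labels_def by auto
  define tE where "tE x = (if x \<in> T then fT x else y0)" for x
  define tD where "tD y = (if y \<in> fT ` T then g y else x0)" for y
  have tE: "tE x \<in> ?K" for x unfolding tE_def using fT y0 by auto
  have tD: "tD y \<in> ?L" for y unfolding tD_def g_def using x0 TL by (auto simp: inv_into_into)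
  define E where "E x y t = (if x \<in> ?L \<and> y = tE x \<and> t then 1 else 0 :: real)" for x y t
  define Dc where "Dc y z t = (if y \<in> ?K \<and> z = tD y \<and> t then 1 else 0 :: real)" for y z t
  have chE: "is_channel ?L ?K E"
  proof -
    have "(\<Sum>y\<in>?K. E x y True + E x y False) = 1" if "x \<in> ?L" for x
    proof -
      have "(\<Sum>y\<in>?K. E x y True + E x y False) = (\<Sum>y\<in>?K. if y = tE x then 1 else 0)"
        using that by (intro sum.cong refl) (simp add: E_def)
      also have "\<dots> = 1" using finK tE[of x] by simp
      finally show ?thesis .
    qed
    moreover have "y \<notin> ?K \<Longrightarrow> E x y t = 0" for x y t using tE[of x] unfolding E_def by auto
    moreover have "x \<notin> ?L \<Longrightarrow> E x y t = 0" for x y t unfolding E_def by auto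
    moreover have "0 \<le> E x y t" for x y t unfolding E_def by auto
    ultimately show ?thesis unfolding is_channel_def by blast
  qed
  have chD: "is_channel ?K ?L Dc"
  proof -
    have "(\<Sum>y\<in>?L. Dc x y True + Dc x y False) = 1" if "x \<in> ?K" for x
    proof -
      have "(\<Sum>y\<in>?L. Dc x y True + Dc x y False) = (\<Sum>y\<in>?L. if y = tD x then 1 else 0)"
        using that by (intro sum.cong refl) (simp add: Dc_def)
      also have "\<dots> = 1" using finL tD[of x] by simp
      finally show ?thesis .
    qed
    moreover have "y \<notin> ?L \<Longrightarrow> Dc x y t = 0" for x y t using tD[of x] unfolding Dc_def by auto
    moreover have "x \<notin> ?K \<Longrightarrow> Dc x y t = 0" for x y t unfolding Dc_def by auto
    moreover have "0 \<le> Dc x y t" for x y t unfolding Dc_def by auto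
    ultimately show ?thesis unfolding is_channel_def by blast
  qed
  define C where "C = chan_comp ?K E Dc"
  have chC: "is_channel ?L ?L C" unfolding C_def by (rule comp_channel[OF finL chE chD])
  have hT: "\<forall>x\<in>T. \<forall>z sg. C x z sg = (if z = x \<and> sg then 1 else 0)"
  proof (intro ballI allI)
    fix x z sg assume xT: "x \<in> T"
    then have xL: "x \<in> ?L" using TL by auto
    have "C x z sg = (\<Sum>y\<in>?K. if y = fT x then Dc y z sg else 0)"
      unfolding C_def chan_comp_def
      by (intro sum.cong refl) (simp add: sum_bool E_def tE_def xT xL)
    also have "\<dots> = Dc (fT x) z sg"
    proof -
      have "fT x \<in> ?K" using fT xT by blast
      then show ?thesis using finK by simp
    qed
    also have "\<dots> = (if z = x \<and> sg then 1 else 0)"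
      using fT xT unfolding Dc_def tD_def g_def by (auto simp: inv_into_f_f)
    finally show "C x z sg = (if z = x \<and> sg then 1 else 0)" .
  qed
  have dl: "disturbance ?L ?s C \<le> ereal (2 * (\<Sum>x\<in>?L-T. ?s x))"
    by (rule dist_le[OF finL TL chC hT])
  define Q where "Q xs = (N * \<delta> \<le> \<bar>Sf p xs - N * ?H\<bar>)" for xs
  have "(\<Sum>x\<in>?L-T. ?s x) = (\<Sum>x\<in>?L. if x \<in> ?L - T then ?s x else 0)"
    by (rule sum_restr[OF finL, symmetric]) auto
  also have "\<dots> \<le> (\<Sum>x\<in>?L. if Q (fst x) then ?s x else 0)"
  proof (rule sum_mono)
    fix x assume x: "x \<in> ?L"
    show "(if x \<in> ?L - T then ?s x else 0) \<le> (if Q (fst x) then ?s x else 0)"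
    proof (cases "x \<in> T")
      case True then show ?thesis using snn[rule_format, of x] by auto
    next
      case False
      show ?thesis
      proof (cases "prod_list (map p (fst x)) > 0")
        case True
        with False x have "Sf p (fst x) > N * (?H + \<delta>)" unfolding T_def by auto
        then have "Q (fst x)" unfolding Q_def by (simp add: algebra_simps)
        then show ?thesis using snn[rule_format, of x] by simp
      next
        case False
        then have "prod_list (map p (fst x)) = 0" using P_nn[OF x] by simp
        then show ?thesis using sigma_at[OF x] snn by auto
      qed
    qed
  qed
  also have "\<dots> = (\<Sum>xs\<in>{xs\<in>WL D N. Q xs}. prod_list (map p xs))" by (rule mass)
  also have "\<dots> \<le> Vp D p / (N * \<delta>^2)" unfolding Q_def using cheb'[of N \<delta>] N1 dpos by simp
  finally have "2 * (\<Sum>x\<in>?L-T. ?s x) < eps" using V4 epos by linarith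
  then have "ereal (2 * (\<Sum>x\<in>?L-T. ?s x)) < ereal eps" by simp
  with dl have "disturbance ?L ?s C < ereal eps" by (rule le_less_trans)
  then show ?thesis unfolding code_exists_def M_def[symmetric] C_def using chE chD by blast
qed


lemma H_nn: "0 \<le> shannon D p"
proof -
  have "p i * log 2 (p i) \<le> 0" if i: "i < D" for i
  proof -
    have "p i \<le> (\<Sum>j<D. p j)" by (rule member_le_sum) (use i pnn in auto)
    then have p1: "p i \<le> 1" using psum by simp
    show ?thesis
    proof (cases "p i = 0")
      case False
      then have "0 < p i" using pnn i by (simp add: order_le_neq_trans)
      then have "log 2 (p i) \<le> 0" using p1 by simp
      then show ?thesis using pnn i by (simp add: mult_nonneg_nonpos)
    qed simp
  qed
  then have "(\<Sum>i<D. p i * log 2 (p i)) \<le> 0" by (intro sum_nonpos) auto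
  then show ?thesis unfolding shannon_def by simp
qed

lemma rate_lim:
  assumes epos: "0 < eps" and eps2: "eps < 1/2"
  shows "(\<lambda>N. rate D p N eps) \<longlonglongrightarrow> (shannon D p + 1) / 2"
proof (rule LIMSEQ_I)
  fix r :: real assume r: "0 < r"
  let ?H = "shannon D p" and ?V = "Vp D p"
  define \<delta> where "\<delta> = r / 2"
  have dpos: "0 < \<delta>" using r unfolding \<delta>_def by simp
  define mm where "mm = min (eps / 4) (1 / 4)"
  have mmpos: "0 < mm" using epos unfolding mm_def by simp
  define no where "no = nat \<lceil>?V / (\<delta>^2 * mm)\<rceil> + nat \<lceil>8 / r\<rceil> + 1"
  show "\<exists>no. \<forall>N\<ge>no. norm (rate D p N eps - (?H + 1) / 2) < r"
  proof (intro exI allI impI)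
    fix N assume N: "no \<le> N"
    have N1: "1 \<le> N" using N unfolding no_def by simp
    have Npos: "0 < real N" using N1 by simp
    have "?V / (\<delta>^2 * mm) \<le> real N"
      using N real_nat_ceiling_ge[of "?V / (\<delta>^2 * mm)"] unfolding no_def by linarith
    then have "?V \<le> real N * (\<delta>^2 * mm)" using dpos mmpos by (simp add: pos_divide_le_eq)
    then have Vm: "?V / (N * \<delta>^2) \<le> mm" using dpos Npos by (simp add: pos_divide_le_eq algebra_simps)
    have N8: "8 / r \<le> real N"
      using N real_nat_ceiling_ge[of "8 / r"] unfolding no_def by linarith
    then have N2: "2 / real N \<le> r / 4" using r Npos by (simp add: field_simps)
    define M0 where "M0 = nat \<lceil>N * (?H + 1 + \<delta>) / 2\<rceil> + 1"
    have ex: "code_exists D p N M0 eps"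
      unfolding M0_def by (rule achieve[OF N1 dpos epos]) (use Vm mm_def in simp)
    define Ms where "Ms = (LEAST M. 1 \<le> M \<and> code_exists D p N M eps)"
    have ex': "1 \<le> M0 \<and> code_exists D p N M0 eps" using ex unfolding M0_def by simp
    have Msle: "Ms \<le> M0" unfolding Ms_def by (rule Least_le) (rule ex')
    have Msok: "1 \<le> Ms \<and> code_exists D p N Ms eps" unfolding Ms_def by (rule LeastI) (rule ex')
    have low: "N * (?H + 1 - \<delta>) - 3 < 2 * Ms"
      using converse[OF N1 dpos _ eps2] Msok Vm unfolding mm_def by auto
    have "real M0 \<le> N * (?H + 1 + \<delta>) / 2 + 2"
    proof -
      have "0 \<le> N * (?H + 1 + \<delta>) / 2" using H_nn dpos by simp
      then have "real (nat \<lceil>N * (?H + 1 + \<delta>) / 2\<rceil>) \<le> N * (?H + 1 + \<delta>) / 2 + 1"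
        by linarith
      then show ?thesis unfolding M0_def by simp
    qed
    then have up: "real Ms \<le> N * (?H + 1 + \<delta>) / 2 + 2" using Msle by linarith
    have rate: "rate D p N eps = real Ms / N" unfolding rate_def Ms_def ..
    have "real Ms / N \<le> (N * (?H + 1 + \<delta>) / 2 + 2) / N" using up Npos by (simp add: divide_right_mono)
    also have "\<dots> = (?H + 1) / 2 + \<delta> / 2 + 2 / N" using Npos by (simp add: field_simps)
    finally have A: "rate D p N eps - (?H + 1) / 2 \<le> \<delta> / 2 + 2 / N" unfolding rate by simp
    have "(N * (?H + 1 - \<delta>) - 3) / (2 * N) < (2 * real Ms) / (2 * N)"
      using low Npos by (intro divide_strict_right_mono) auto
    also have "(2 * real Ms) / (2 * N) = real Ms / N" by simp
    also have "(N * (?H + 1 - \<delta>) - 3) / (2 * N) = (?H + 1) / 2 - \<delta> / 2 - 3 / (2 * N)"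
      using Npos by (simp add: field_simps)
    finally have B: "(?H + 1) / 2 - rate D p N eps < \<delta> / 2 + 3 / (2 * N)" unfolding rate by simp
    have N3: "3 / (2 * N) \<le> 2 / N" using Npos by (simp add: field_simps)
    note A
    moreover note B
    ultimately show "norm (rate D p N eps - (?H + 1) / 2) < r"
      using N2 N3 r unfolding \<delta>_def by (simp add: abs_less_iff)
  qed
qed

end

theorem theorem1:
  fixes D :: nat and p :: "nat \<Rightarrow> real"
  assumes "2 \<le> D" and "\<forall>i<D. 0 \<le> p i" and "(\<Sum>i<D. p i) = 1"
  shows "((\<lambda>eps. limsup (\<lambda>N. ereal (rate D p N eps)))
            \<longlongrightarrow> ereal ((shannon D p + 1) / 2)) (at_right 0)"
proof -
  have lim: "limsup (\<lambda>N. ereal (rate D p N eps)) = ereal ((shannon D p + 1) / 2)"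
    if "eps \<in> {0<..<1/2}" for eps :: real
  proof (rule lim_imp_Limsup)
    show "\<not> trivial_limit sequentially" by simp
    show "((\<lambda>N. ereal (rate D p N eps)) \<longlongrightarrow> ereal ((shannon D p + 1) / 2)) sequentially"
      using rate_lim[OF assms] that by auto
  qed
  have ev: "eventually (\<lambda>eps. ereal ((shannon D p + 1) / 2) = limsup (\<lambda>N. ereal (rate D p N eps))) (at_right (0::real))"
  proof -
    have e0: "eventually (\<lambda>x. x \<in> {0<..<1/2}) (at_right (0::real))"
      by (rule eventually_at_right_real) simp
    show ?thesis using e0 by (rule eventually_mono) (erule lim[symmetric])
  qed
  show ?thesis by (rule Lim_transform_eventually[OF tendsto_const ev])
qed


end
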